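(* Let $\mathsf V$ and $\mathsf W$ be cyclically reduced linear words. The function $\mathsf s_{\mathsf V,\mathsf W}:I(\mathsf V,\mathsf W)\to\{1,-1,0\}$ is constant on each equivalence class of $\mathcal R(\mathsf V,\mathsf W)$.
   Context: Fix an alphabet $\mathbb A_q=\{a_1,\dots,a_q,\bar a_1,\dots,\bar a_q\}$ with a fixed linear order and $\bar{\bar v}=v$. A linear word $\mathsf V=v_0\cdots v_{n-1}$ is a non-empty finite sequence of letters; subscripts are read modulo the length. $\bar{\mathsf V}=\bar v_{n-1}\cdots\bar v_0$. $\mathsf V$ is cyclically reduced if $v_i\ne\bar v_{i+1}$ for all $i$ (indices mod $n$). $\mathsf V_j=v_jv_{j+1}\cdots v_{n-1}v_0\cdots v_{j-1}$. For cyclically reduced $\mathsf V=v_0\cdots v_{n-1}$, $\mathsf W=w_0\cdots w_{m-1}$, $I(\mathsf V,\mathsf W)=\{(j,k):0\le j<n,\,0\le k<m\}$ (entries mod $n$, mod $m$) and $\mathcal R(\mathsf V,\mathsf W)$ is the equivalence relation generated by $(j,k)\sim(j+1,k+1)$ whenever $v_j=w_k$, and $(j+1,k)\sim(j,k+1)$ whenever $v_j=\bar w_k$. For reduced half-infinite words $\mathsf T=t_0t_1\cdots$, $\mathsf U=u_0u_1\cdots$, $\mathsf T<\mathsf U$ if $t_0<u_0$, or if for some $j\ge0$, $t_i=u_i$ for $0\le i\le j$ and $t_{j+1}$ precedes $u_{j+1}$ in the order obtained by cyclically permuting the order of $\mathbb A_q$ so that $\bar t_j$ is first. $\mathsf V^{\infty}=\mathsf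 V\mathsf V\cdots$, $\mathsf V^{-\infty}=\bar{\mathsf V}\bar{\mathsf V}\cdots$ (so $\mathsf V_i^{\pm\infty}=(\mathsf V_i)^{\pm\infty}$). A 4-tuple of half-infinite words is cyclically ordered if some cyclic permutation of it is strictly increasing. $\mathsf s_{\mathsf V,\mathsf W}(i,j)=1$ if $(\mathsf V_i^\infty,\mathsf W_j^\infty,\mathsf V_i^{-\infty},\mathsf W_j^{-\infty})$ is cyclically ordered, $-1$ if $(\mathsf V_i^\infty,\mathsf W_j^{-\infty},\mathsf V_i^{-\infty},\mathsf W_j^{\infty})$ is cyclically ordered, and $0$ otherwise. *)

theory Defs
  imports Main
begin

text \<open>Letters: a_i is \<open>Ltr i False\<close>, the barred letter is \<open>Ltr i True\<close>.\<close>
datatype letter = Ltr nat bool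

fun bar :: "letter \<Rightarrow> letter" where
  "bar (Ltr i b) = Ltr i (\<not> b)"

definition alphabet :: "nat \<Rightarrow> letter set" where
  "alphabet q = {Ltr i b | i b. i < q}"

text \<open>The fixed linear order on the alphabet is given by an injective rank function
  \<open>rk\<close>: u precedes v iff rk u < rk v.\<close>

text \<open>u precedes v in the order obtained by cyclically permuting the order so that x is first.\<close>
definition cyc_prec :: "(letter \<Rightarrow> nat) \<Rightarrow> letter \<Rightarrow> letter \<Rightarrow> letter \<Rightarrow> bool" where
  "cyc_prec rk x u v \<longleftrightarrow>
     (rk x \<le> rk u \<and> rk v < rk x) \<or>
     ((rk x \<le> rk u \<longleftrightarrow> rk x \<le> rk v) \<and> rk u < rk v)"

definition word_less :: "(letter \<Rightarrow> nat) \<Rightarrow> (nat \<Rightarrow> letter) \<Rightarrow> (nat \<Rightarrow> letter) \<Rightarrow> bool" where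
  "word_less rk T U \<longleftrightarrow>
     rk (T 0) < rk (U 0) \<or>
     (\<exists>j. (\<forall>i\<le>j. T i = U i) \<and> cyc_prec rk (bar (T j)) (T (Suc j)) (U (Suc j)))"

definition cyc_ordered :: "(letter \<Rightarrow> nat) \<Rightarrow> (nat \<Rightarrow> letter) \<Rightarrow> (nat \<Rightarrow> letter) \<Rightarrow>
    (nat \<Rightarrow> letter) \<Rightarrow> (nat \<Rightarrow> letter) \<Rightarrow> bool" where
  "cyc_ordered rk a b c d \<longleftrightarrow>
     (word_less rk a b \<and> word_less rk b c \<and> word_less rk c d) \<or>
     (word_less rk b c \<and> word_less rk c d \<and> word_less rk d a) \<or>
     (word_less rk c d \<and> word_less rk d a \<and> word_less rk a b) \<or>
     (word_less rk d a \<and> word_less rk a b \<and> word_less rk b c)"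

definition cyc_reduced :: "letter list \<Rightarrow> bool" where
  "cyc_reduced V \<longleftrightarrow> (\<forall>i<length V. V ! i \<noteq> bar (V ! ((i + 1) mod length V)))"

text \<open>(V_i)^\<infinity> and (V_i)^{-\<infinity>}, with V_i the cyclic shift starting at position i.\<close>
definition pinf :: "letter list \<Rightarrow> nat \<Rightarrow> nat \<Rightarrow> letter" where
  "pinf V i k = V ! ((i + k) mod length V)"

definition ninf :: "letter list \<Rightarrow> nat \<Rightarrow> nat \<Rightarrow> letter" where
  "ninf V i k = bar (V ! nat ((int i - 1 - int k) mod int (length V)))"

definition sfun :: "(letter \<Rightarrow> nat) \<Rightarrow> letter list \<Rightarrow> letter list \<Rightarrow> nat \<Rightarrow> nat \<Rightarrow> int" where
  "sfun rk V W i j =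
     (if cyc_ordered rk (pinf V i) (pinf W j) (ninf V i) (ninf W j) then 1
      else if cyc_ordered rk (pinf V i) (ninf W j) (ninf V i) (pinf W j) then -1
      else 0)"

definition Iset :: "letter list \<Rightarrow> letter list \<Rightarrow> (nat \<times> nat) set" where
  "Iset V W = {(j, k). j < length V \<and> k < length W}"

definition Rgen :: "letter list \<Rightarrow> letter list \<Rightarrow> ((nat \<times> nat) \<times> (nat \<times> nat)) set" where
  "Rgen V W =
     {((j, k), ((j + 1) mod length V, (k + 1) mod length W)) | j k.
        j < length V \<and> k < length W \<and> V ! j = W ! k} \<union>
     {(((j + 1) mod length V, k), (j, (k + 1) mod length W)) | j k.
        j < length V \<and> k < length W \<and> V ! j = bar (W ! k)}"

definition Rrel :: "letter list \<Rightarrow> letter list \<Rightarrow> ((nat \<times> nat) \<times> (nat \<times> nat)) set" where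
  "Rrel V W = (Rgen V W \<union> (Rgen V W)\<inverse>)\<^sup>* \<inter> (Iset V W \<times> Iset V W)"

end

theory Submission
  imports Defs
begin

definition wt :: "(letter \<Rightarrow> nat) \<Rightarrow> (nat \<Rightarrow> letter) \<Rightarrow> (nat \<Rightarrow> letter) \<Rightarrow> bool" where
  "wt rk T U \<longleftrightarrow> (\<exists>j. (\<forall>i\<le>j. T i = U i) \<and> cyc_prec rk (bar (T j)) (T (Suc j)) (U (Suc j)))"

lemma wl_split: "word_less rk T U \<longleftrightarrow> rk (T 0) < rk (U 0) \<or> wt rk T U"
  by (simp add: word_less_def wt_def)

definition cns :: "letter \<Rightarrow> (nat \<Rightarrow> letter) \<Rightarrow> nat \<Rightarrow> letter" where
  "cns c T n = (case n of 0 \<Rightarrow> c | Suc m \<Rightarrow> T m)"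

lemma cns_0[simp]: "cns c T 0 = c" and cns_Suc[simp]: "cns c T (Suc n) = T n"
  by (simp_all add: cns_def)

lemma cyc_prec_irrefl: "\<not> cyc_prec rk x u u" by (auto simp: cyc_prec_def)

lemma wt_head: "wt rk T U \<Longrightarrow> T 0 = U 0" by (auto simp: wt_def)

lemma wt_cons: "wt rk (cns c T) (cns c U) \<longleftrightarrow> cyc_prec rk (bar c) (T 0) (U 0) \<or> wt rk T U"
proof
  assume "wt rk (cns c T) (cns c U)"
  then obtain j where j: "\<forall>i\<le>j. cns c T i = cns c U i"
    "cyc_prec rk (bar (cns c T j)) (cns c T (Suc j)) (cns c U (Suc j))"
    unfolding wt_def by blast
  show "cyc_prec rk (bar c) (T 0) (U 0) \<or> wt rk T U"
  proof (cases j)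
    case 0 then show ?thesis using j by simp
  next
    case (Suc j')
    have "\<forall>i\<le>j'. T i = U i"
    proof (intro allI impI)
      fix i assume "i \<le> j'"
      then have "Suc i \<le> j" using Suc by simp
      then have "cns c T (Suc i) = cns c U (Suc i)" using j(1) by blast
      then show "T i = U i" by simp
    qed
    then have "wt rk T U" unfolding wt_def using j(2) Suc by auto
    then show ?thesis by simp
  qed
next
  assume "cyc_prec rk (bar c) (T 0) (U 0) \<or> wt rk T U"
  then show "wt rk (cns c T) (cns c U)"
  proof
    assume "cyc_prec rk (bar c) (T 0) (U 0)"
    then show ?thesis unfolding wt_def by (intro exI[of _ 0]) simp
  next
    assume "wt rk T U"
    then obtain j where j: "\<forall>i\<le>j. T i = U i" "cyc_prec rk (bar (T j)) (T (Suc j)) (U (Suc j))"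
      unfolding wt_def by blast
    have "\<forall>i\<le>Suc j. cns c T i = cns c U i"
      using j(1) by (auto simp: cns_def split: nat.split)
    then show ?thesis unfolding wt_def using j(2) by (intro exI[of _ "Suc j"]) simp
  qed
qed

lemma wt_asym: assumes "wt rk T U" "wt rk U T" shows False
proof -
  obtain j where j: "\<forall>i\<le>j. T i = U i" "cyc_prec rk (bar (T j)) (T (Suc j)) (U (Suc j))"
    using assms(1) unfolding wt_def by blast
  obtain k where k: "\<forall>i\<le>k. U i = T i" "cyc_prec rk (bar (U k)) (U (Suc k)) (T (Suc k))"
    using assms(2) unfolding wt_def by blast
  consider "j < k" | "j = k" | "k < j" by arith
  then show False
  proof cases
    case 1 then have "T (Suc j) = U (Suc j)" using k(1) by auto
    then show False using j(2) cyc_prec_irrefl by metis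
  next
    case 2 then show False using j k by (auto simp: cyc_prec_def)
  next
    case 3 then have "T (Suc k) = U (Suc k)" using j(1) by auto
    then show False using k(2) cyc_prec_irrefl by metis
  qed
qed

lemma wl_asym: "word_less rk T U \<Longrightarrow> \<not> word_less rk U T"
  unfolding wl_split using wt_asym wt_head by (metis less_asym less_irrefl)

definition cyc4 :: "('a \<Rightarrow> 'a \<Rightarrow> bool) \<Rightarrow> 'a \<Rightarrow> 'a \<Rightarrow> 'a \<Rightarrow> 'a \<Rightarrow> bool" where
  "cyc4 R a b c d \<longleftrightarrow> (R a b \<and> R b c \<and> R c d) \<or> (R b c \<and> R c d \<and> R d a) \<or>
     (R c d \<and> R d a \<and> R a b) \<or> (R d a \<and> R a b \<and> R b c)"

lemma cyc4_rot:
  assumes S: "a \<in> S" "b \<in> S" "c \<in> S" "d \<in> S"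
   and asym: "\<forall>x\<in>S. \<forall>y\<in>S. R x y \<longrightarrow> \<not> R y x"
   and cross: "\<forall>x\<in>S. \<forall>y\<in>S. C x \<longrightarrow> \<not> C y \<longrightarrow> R x y"
   and rel: "\<forall>x\<in>S. \<forall>y\<in>S. R' x y \<longleftrightarrow> ((C x \<longleftrightarrow> C y) \<and> R x y) \<or> (\<not> C x \<and> C y)"
  shows "cyc4 R' a b c d \<longleftrightarrow> cyc4 R a b c d"
proof -
  have r: "\<And>x y. x \<in> S \<Longrightarrow> y \<in> S \<Longrightarrow> R' x y = (((C x \<longleftrightarrow> C y) \<and> R x y) \<or> (\<not> C x \<and> C y))"
    using rel by blast
  have as: "\<And>x y. x \<in> S \<Longrightarrow> y \<in> S \<Longrightarrow> R x y \<Longrightarrow> \<not> R y x" using asym by blast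
  have cr: "\<And>x y. x \<in> S \<Longrightarrow> y \<in> S \<Longrightarrow> C x \<Longrightarrow> \<not> C y \<Longrightarrow> R x y" using cross by blast
  show ?thesis unfolding cyc4_def
    using S r[OF S(1) S(2)] r[OF S(2) S(3)] r[OF S(3) S(4)] r[OF S(4) S(1)]
      cr[OF S(1) S(2)] cr[OF S(2) S(3)] cr[OF S(3) S(4)] cr[OF S(4) S(1)]
      cr[OF S(2) S(1)] cr[OF S(3) S(2)] cr[OF S(4) S(3)] cr[OF S(1) S(4)]
      as[OF S(1) S(2)] as[OF S(2) S(3)] as[OF S(3) S(4)] as[OF S(4) S(1)]
    by argo
qed


definition good :: "nat \<Rightarrow> (nat \<Rightarrow> letter) \<Rightarrow> bool" where
  "good q X \<longleftrightarrow> (\<forall>n. X n \<in> alphabet q) \<and> (\<forall>n. X (Suc n) \<noteq> bar (X n))"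

definition shft :: "letter \<Rightarrow> (nat \<Rightarrow> letter) \<Rightarrow> nat \<Rightarrow> letter" where
  "shft a X = (if X 0 = a then (\<lambda>n. X (Suc n)) else cns (bar a) X)"

definition inC :: "(letter \<Rightarrow> nat) \<Rightarrow> letter \<Rightarrow> (nat \<Rightarrow> letter) \<Rightarrow> bool" where
  "inC rk a X \<longleftrightarrow> rk (X 0) < rk a \<or> (X 0 = a \<and> rk (bar a) < rk (X 1))"

lemma bar_alph: "x \<in> alphabet q \<Longrightarrow> bar x \<in> alphabet q"
  by (cases x) (auto simp: alphabet_def)

lemma bar_bar[simp]: "bar (bar x) = x" by (cases x) auto

lemma bar_eq_iff: "bar x = y \<longleftrightarrow> x = bar y" by (cases x; cases y) auto

lemma rk_neq: "inj_on rk (alphabet q) \<Longrightarrow> x \<in> alphabet q \<Longrightarrow> y \<in> alphabet q \<Longrightarrow> x \<noteq> y \<Longrightarrow> rk x \<noteq> rk y"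
  by (meson inj_onD)

lemma cns_tl: "X 0 = a \<Longrightarrow> X = cns a (\<lambda>n. X (Suc n))"
  by (rule ext) (simp add: cns_def split: nat.split)

lemma shift_less:
  assumes inj: "inj_on rk (alphabet q)" and a: "a \<in> alphabet q" and gX: "good q X" and gY: "good q Y"
  shows "word_less rk (shft a X) (shft a Y) \<longleftrightarrow>
     ((inC rk a X \<longleftrightarrow> inC rk a Y) \<and> word_less rk X Y) \<or> (\<not> inC rk a X \<and> inC rk a Y)"
proof -
  have ba: "bar a \<in> alphabet q" using a bar_alph by blast
  have X0: "X 0 \<in> alphabet q" and X1: "X 1 \<in> alphabet q" and Y0: "Y 0 \<in> alphabet q"
    and Y1: "Y 1 \<in> alphabet q" using gX gY good_def by auto
  have rX: "X 1 \<noteq> bar (X 0)" and rY: "Y 1 \<noteq> bar (Y 0)" using gX gY unfolding good_def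
    by (metis One_nat_def)+
  define X' where "X' = (\<lambda>n. X (Suc n))"
  define Y' where "Y' = (\<lambda>n. Y (Suc n))"
  have X'0: "X' 0 = X 1" and Y'0: "Y' 0 = Y 1" by (simp_all add: X'_def Y'_def)
  show ?thesis
  proof (cases "X 0 = a")
    case xa: True
    have hX: "X = cns a X'" using cns_tl[of X a, OF xa] X'_def by simp
    have sX: "shft a X = X'" using xa by (simp add: shft_def X'_def)
    have nX: "X 1 \<noteq> bar a" using rX xa by simp
    have iX: "inC rk a X \<longleftrightarrow> rk (bar a) < rk (X 1)" using xa by (simp add: inC_def)
    have kX: "rk (X 1) \<noteq> rk (bar a)" using rk_neq[OF inj X1 ba nX] .
    show ?thesis
    proof (cases "Y 0 = a")
      case ya: True
      have hY: "Y = cns a Y'" using cns_tl[of Y a, OF ya] Y'_def by simp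
      have sY: "shft a Y = Y'" using ya by (simp add: shft_def Y'_def)
      have nY: "Y 1 \<noteq> bar a" using rY ya by simp
      have iY: "inC rk a Y \<longleftrightarrow> rk (bar a) < rk (Y 1)" using ya by (simp add: inC_def)
      have kY: "rk (Y 1) \<noteq> rk (bar a)" using rk_neq[OF inj Y1 ba nY] .
      have wXY: "word_less rk X Y \<longleftrightarrow> cyc_prec rk (bar a) (X 1) (Y 1) \<or> wt rk X' Y'"
      proof -
        have "word_less rk X Y = word_less rk (cns a X') (cns a Y')" using hX hY by simp
        also have "\<dots> = (cyc_prec rk (bar a) (X 1) (Y 1) \<or> wt rk X' Y')"
          by (simp add: wl_split wt_cons X'0 Y'0)
        finally show ?thesis .
      qed
      have wS: "word_less rk X' Y' \<longleftrightarrow> rk (X 1) < rk (Y 1) \<or> wt rk X' Y'"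
        by (simp add: wl_split X'0 Y'0)
      show ?thesis
      proof (cases "X 1 = Y 1")
        case True
        then show ?thesis unfolding sX sY wXY wS iX iY using cyc_prec_irrefl by simp
      next
        case False
        have "\<not> wt rk X' Y'" using wt_head False X'0 Y'0 by metis
        moreover have "rk (X 1) \<noteq> rk (Y 1)" using rk_neq[OF inj X1 Y1 False] .
        ultimately show ?thesis unfolding sX sY wXY wS iX iY using kX kY
          by (simp add: cyc_prec_def) arith
      qed
    next
      case ya: False
      have sY: "shft a Y = cns (bar a) Y" using ya by (simp add: shft_def)
      have iY: "inC rk a Y \<longleftrightarrow> rk (Y 0) < rk a" using ya by (simp add: inC_def)
      have kY: "rk (Y 0) \<noteq> rk a" using rk_neq[OF inj Y0 a ya] .
      have wXY: "word_less rk X Y \<longleftrightarrow> rk a < rk (Y 0)"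
        unfolding wl_split using wt_head[of rk X Y] ya xa by auto
      have wS: "word_less rk X' (cns (bar a) Y) \<longleftrightarrow> rk (X 1) < rk (bar a)"
        unfolding wl_split using wt_head[of rk X' "cns (bar a) Y"] nX X'0 by auto
      show ?thesis unfolding sX sY wXY wS iX iY using kX kY by arith
    qed
  next
    case xa: False
    have sX: "shft a X = cns (bar a) X" using xa by (simp add: shft_def)
    have iX: "inC rk a X \<longleftrightarrow> rk (X 0) < rk a" using xa by (simp add: inC_def)
    have kX: "rk (X 0) \<noteq> rk a" using rk_neq[OF inj X0 a xa] .
    show ?thesis
    proof (cases "Y 0 = a")
      case ya: True
      have sY: "shft a Y = Y'" using ya by (simp add: shft_def Y'_def)
      have nY: "Y 1 \<noteq> bar a" using rY ya by simp
      have iY: "inC rk a Y \<longleftrightarrow> rk (bar a) < rk (Y 1)" using ya by (simp add: inC_def)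
      have kY: "rk (Y 1) \<noteq> rk (bar a)" using rk_neq[OF inj Y1 ba nY] .
      have wXY: "word_less rk X Y \<longleftrightarrow> rk (X 0) < rk a"
        unfolding wl_split using wt_head[of rk X Y] ya xa by auto
      have wS: "word_less rk (cns (bar a) X) Y' \<longleftrightarrow> rk (bar a) < rk (Y 1)"
        unfolding wl_split using wt_head[of rk "cns (bar a) X" Y'] nY Y'0 by auto
      show ?thesis unfolding sX sY wXY wS iX iY using kX kY by arith
    next
      case ya: False
      have sY: "shft a Y = cns (bar a) Y" using ya by (simp add: shft_def)
      have iY: "inC rk a Y \<longleftrightarrow> rk (Y 0) < rk a" using ya by (simp add: inC_def)
      have kY: "rk (Y 0) \<noteq> rk a" using rk_neq[OF inj Y0 a ya] .
      have wS: "word_less rk (cns (bar a) X) (cns (bar a) Y) \<longleftrightarrow> cyc_prec rk a (X 0) (Y 0) \<or> wt rk X Y"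
        by (simp add: wl_split wt_cons)
      have wXY: "word_less rk X Y \<longleftrightarrow> rk (X 0) < rk (Y 0) \<or> wt rk X Y"
        by (simp add: wl_split)
      show ?thesis
      proof (cases "X 0 = Y 0")
        case True
        then show ?thesis unfolding sX sY wXY wS iX iY using cyc_prec_irrefl by simp
      next
        case False
        have "\<not> wt rk X Y" using wt_head False by metis
        moreover have "rk (X 0) \<noteq> rk (Y 0)" using rk_neq[OF inj X0 Y0 False] .
        ultimately show ?thesis unfolding sX sY wXY wS iX iY using kX kY
          by (simp add: cyc_prec_def) arith
      qed
    qed
  qed
qed

lemma cross:
  assumes inj: "inj_on rk (alphabet q)" and a: "a \<in> alphabet q" and gX: "good q X" and gY: "good q Y"
    and cX: "inC rk a X" and cY: "\<not> inC rk a Y"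
  shows "word_less rk X Y"
proof -
  have ba: "bar a \<in> alphabet q" using a bar_alph by blast
  have Y0: "Y 0 \<in> alphabet q" and Y1: "Y 1 \<in> alphabet q" using gY good_def by auto
  have rY: "Y 1 \<noteq> bar (Y 0)" using gY unfolding good_def by (metis One_nat_def)
  show ?thesis
  proof (cases "X 0 = a")
    case xa: True
    then have x1: "rk (bar a) < rk (X 1)" using cX by (simp add: inC_def)
    show ?thesis
    proof (cases "Y 0 = a")
      case ya: True
      have "rk (Y 1) \<noteq> rk (bar a)" using rk_neq[OF inj Y1 ba] rY ya by simp
      then have "rk (Y 1) < rk (bar a)" using cY ya by (simp add: inC_def)
      then have "cyc_prec rk (bar a) (X 1) (Y 1)" using x1 by (simp add: cyc_prec_def)
      then have "wt rk X Y" unfolding wt_def using xa ya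
        by (intro exI[of _ 0]) simp
      then show ?thesis by (simp add: wl_split)
    next
      case ya: False
      have "rk (Y 0) \<noteq> rk a" using rk_neq[OF inj Y0 a ya] .
      then show ?thesis using cY xa by (simp add: inC_def wl_split)
    qed
  next
    case xa: False
    then have "rk (X 0) < rk a" using cX by (simp add: inC_def)
    moreover have "rk a \<le> rk (Y 0)" using cY by (simp add: inC_def)
    ultimately show ?thesis by (simp add: wl_split)
  qed
qed


lemma cyc_ordered_cyc4: "cyc_ordered rk a b c d = cyc4 (word_less rk) a b c d"
  by (simp add: cyc_ordered_def cyc4_def)

lemma cyc_ordered_shift:
  assumes inj: "inj_on rk (alphabet q)" and a: "a \<in> alphabet q"
    and g: "good q P" "good q Q" "good q N" "good q M"
  shows "cyc_ordered rk (shft a P) (shft a Q) (shft a N) (shft a M) \<longleftrightarrow> cyc_ordered rk P Q N M"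
proof -
  have "cyc4 (\<lambda>X Y. word_less rk (shft a X) (shft a Y)) P Q N M \<longleftrightarrow> cyc4 (word_less rk) P Q N M"
    apply (rule cyc4_rot[where S = "{X. good q X}" and C = "inC rk a"])
    using g apply simp_all
    using wl_asym apply blast
    using cross[OF inj a] apply blast
    using shift_less[OF inj a] by blast
  then show ?thesis by (simp add: cyc_ordered_def cyc4_def)
qed

definition F :: "(letter \<Rightarrow> nat) \<Rightarrow> (nat \<Rightarrow> letter) \<Rightarrow> (nat \<Rightarrow> letter) \<Rightarrow> (nat \<Rightarrow> letter) \<Rightarrow> (nat \<Rightarrow> letter) \<Rightarrow> int" where
  "F rk P Q N M = (if cyc_ordered rk P Q N M then 1 else if cyc_ordered rk P M N Q then -1 else 0)"

lemma F_shift: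
  assumes inj: "inj_on rk (alphabet q)" and a: "a \<in> alphabet q"
    and g: "good q P" "good q Q" "good q N" "good q M"
  shows "F rk (shft a P) (shft a Q) (shft a N) (shft a M) = F rk P Q N M"
  unfolding F_def using cyc_ordered_shift[OF inj a g] cyc_ordered_shift[OF inj a g(1) g(4) g(3) g(2)]
  by simp

lemma sfun_F: "sfun rk V W i j = F rk (pinf V i) (pinf W j) (ninf V i) (ninf W j)"
  by (simp add: sfun_def F_def)


lemma idx_suc: assumes "(n::nat) > 0"
  shows "Suc (nat ((int i - 1 - int k) mod int n)) mod n = nat ((int i - int k) mod int n)"
proof -
  let ?m = "(int i - 1 - int k) mod int n"
  have m0: "?m \<ge> 0" using assms by simp
  have "int (Suc (nat ?m) mod n) = (?m + 1) mod int n" using m0 by (simp add: of_nat_mod add.commute)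
  also have "\<dots> = (int i - 1 - int k + 1) mod int n" by (simp add: mod_add_left_eq)
  also have "\<dots> = (int i - int k) mod int n" by simp
  finally show ?thesis by (metis nat_int)
qed

lemma cr_gen: assumes "cyc_reduced V" "V \<noteq> []"
  shows "V ! (i mod length V) \<noteq> bar (V ! (Suc i mod length V))"
proof -
  have "i mod length V < length V" using assms(2) by simp
  then have "V ! (i mod length V) \<noteq> bar (V ! ((i mod length V + 1) mod length V))"
    using assms(1) unfolding cyc_reduced_def by blast
  then show ?thesis by (simp add: mod_Suc_eq)
qed

lemma pinf_mod: "V \<noteq> [] \<Longrightarrow> pinf V (i mod length V) = pinf V i"
  by (rule ext) (simp add: pinf_def mod_add_left_eq)

lemma ninf_mod: assumes "V \<noteq> []" shows "ninf V (i mod length V) = ninf V i"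
proof (rule ext)
  fix k
  have "(int (i mod length V) - 1 - int k) mod int (length V) = (int i - 1 - int k) mod int (length V)"
    using mod_diff_left_eq[of "int i" "int (length V)" "1 + int k"]
    by (simp add: of_nat_mod algebra_simps)
  then show "ninf V (i mod length V) k = ninf V i k" by (simp add: ninf_def)
qed

lemma pinf_0: "pinf V i 0 = V ! (i mod length V)" by (simp add: pinf_def)

lemma pinf_tl: "(\<lambda>k. pinf V i (Suc k)) = pinf V (Suc i)"
  by (rule ext) (simp add: pinf_def)

lemma pinf_cns: "pinf V i = cns (V ! (i mod length V)) (pinf V (Suc i))"
  by (rule ext) (simp add: pinf_def cns_def split: nat.split)

lemma ninf_Suc: assumes "V \<noteq> []"
  shows "ninf V (Suc i) = cns (bar (V ! (i mod length V))) (ninf V i)"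
proof (rule ext)
  fix k show "ninf V (Suc i) k = cns (bar (V ! (i mod length V))) (ninf V i) k"
  proof (cases k)
    case 0 then show ?thesis by (simp add: ninf_def nat_mod_as_int)
  next
    case (Suc k')
    have e: "int (Suc i) - 1 - int (Suc k') = int i - 1 - int k'" by simp
    show ?thesis unfolding Suc ninf_def e by simp
  qed
qed

lemma ninf_0_ne: assumes "cyc_reduced V" "V \<noteq> []"
  shows "ninf V i 0 \<noteq> V ! (i mod length V)"
proof -
  let ?m = "nat ((int i - 1) mod int (length V))"
  have ml: "?m < length V" using assms(2) by (simp add: nat_less_iff)
  have s: "Suc ?m mod length V = i mod length V"
    using idx_suc[of "length V" i 0] assms(2) by (simp add: nat_mod_as_int)
  have "V ! (?m mod length V) \<noteq> bar (V ! (Suc ?m mod length V))" using cr_gen[OF assms] .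
  then have "V ! ?m \<noteq> bar (V ! (i mod length V))" using ml s by simp
  then show ?thesis by (simp add: ninf_def bar_eq_iff)
qed

lemma good_pinf: assumes "cyc_reduced V" "V \<noteq> []" "set V \<subseteq> alphabet q"
  shows "good q (pinf V i)"
  unfolding good_def
proof (intro conjI allI)
  fix k
  show "pinf V i k \<in> alphabet q" using assms(2,3) by (auto simp: pinf_def)
  have "V ! ((i + k) mod length V) \<noteq> bar (V ! (Suc (i + k) mod length V))" using cr_gen[OF assms(1,2)] .
  then show "pinf V i (Suc k) \<noteq> bar (pinf V i k)" by (auto simp: pinf_def bar_eq_iff)
qed

lemma good_ninf: assumes "cyc_reduced V" "V \<noteq> []" "set V \<subseteq> alphabet q"
  shows "good q (ninf V i)"
  unfolding good_def
proof (intro conjI allI)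
  fix k
  have ml: "nat ((int i - 1 - int k) mod int (length V)) < length V" using assms(2) by (simp add: nat_less_iff)
  then have "V ! nat ((int i - 1 - int k) mod int (length V)) \<in> alphabet q" using assms(3) by auto
  then show "ninf V i k \<in> alphabet q" using bar_alph by (auto simp: ninf_def)
  let ?m = "nat ((int i - 1 - int (Suc k)) mod int (length V))"
  have ml2: "?m < length V" using assms(2) by (simp add: nat_less_iff)
  have s: "Suc ?m mod length V = nat ((int i - 1 - int k) mod int (length V))"
    using idx_suc[of "length V" i "Suc k"] assms(2) by (simp add: algebra_simps)
  have "V ! (?m mod length V) \<noteq> bar (V ! (Suc ?m mod length V))" using cr_gen[OF assms(1,2)] .
  then have "V ! ?m \<noteq> bar (V ! nat ((int i - 1 - int k) mod int (length V)))" using ml2 s by simp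
  then show "ninf V i (Suc k) \<noteq> bar (ninf V i k)" by (simp add: ninf_def bar_eq_iff)
qed


lemma gen_step:
  fixes q :: nat and rk :: "letter \<Rightarrow> nat" and V W :: "letter list"
  assumes inj: "inj_on rk (alphabet q)"
    and V: "V \<noteq> []" and W: "W \<noteq> []"
    and sV: "set V \<subseteq> alphabet q" and sW: "set W \<subseteq> alphabet q"
    and cV: "cyc_reduced V" and cW: "cyc_reduced W"
    and st: "(p, p') \<in> Rgen V W"
  shows "sfun rk V W (fst p) (snd p) = sfun rk V W (fst p') (snd p')"
proof -
  have gP: "\<And>i. good q (pinf V i)" "\<And>i. good q (pinf W i)"
    and gN: "\<And>i. good q (ninf V i)" "\<And>i. good q (ninf W i)"
    using good_pinf[OF cV V sV] good_pinf[OF cW W sW] good_ninf[OF cV V sV] good_ninf[OF cW W sW]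
    by blast+
  have smod: "\<And>i j. sfun rk V W (i mod length V) (j mod length W) = sfun rk V W i j"
    using pinf_mod[OF V] pinf_mod[OF W] ninf_mod[OF V] ninf_mod[OF W] by (simp add: sfun_F)
  have smod1: "\<And>i j. sfun rk V W (i mod length V) j = sfun rk V W i j"
    using pinf_mod[OF V] ninf_mod[OF V] by (simp add: sfun_F)
  have smod2: "\<And>i j. sfun rk V W i (j mod length W) = sfun rk V W i j"
    using pinf_mod[OF W] ninf_mod[OF W] by (simp add: sfun_F)
  from st consider
    (A) j k where "p = (j, k)" "p' = ((j + 1) mod length V, (k + 1) mod length W)"
      "j < length V" "k < length W" "V ! j = W ! k"
  | (B) j k where "p = ((j + 1) mod length V, k)" "p' = (j, (k + 1) mod length W)"
      "j < length V" "k < length W" "V ! j = bar (W ! k)"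
    unfolding Rgen_def by blast
  then show ?thesis
  proof cases
    case (A j k)
    define a where "a = V ! j"
    have a: "a \<in> alphabet q" using A(3) sV a_def by auto
    have jm: "j mod length V = j" and km: "k mod length W = k" using A by simp_all
    have e1: "shft a (pinf V j) = pinf V (Suc j)"
      using pinf_tl[of V j] by (simp add: shft_def pinf_0 jm a_def)
    have e2: "shft a (pinf W k) = pinf W (Suc k)"
      using pinf_tl[of W k] A(5) by (simp add: shft_def pinf_0 km a_def)
    have e3: "shft a (ninf V j) = ninf V (Suc j)"
      using ninf_0_ne[OF cV V, of j] ninf_Suc[OF V, of j] by (simp add: shft_def jm a_def)
    have e4: "shft a (ninf W k) = ninf W (Suc k)"
      using ninf_0_ne[OF cW W, of k] ninf_Suc[OF W, of k] A(5) by (simp add: shft_def km a_def)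
    have "sfun rk V W (Suc j) (Suc k) = sfun rk V W j k"
      using F_shift[OF inj a gP(1)[of j] gP(2)[of k] gN(1)[of j] gN(2)[of k]]
      unfolding sfun_F e1 e2 e3 e4 .
    then show ?thesis using A(1,2) smod by simp
  next
    case (B j k)
    define a where "a = W ! k"
    have a: "a \<in> alphabet q" using B(4) sW a_def by auto
    have jm: "j mod length V = j" and km: "k mod length W = k" using B by simp_all
    have vj: "V ! j = bar a" using B(5) a_def by simp
    have ne: "V ! (Suc j mod length V) \<noteq> a" using cr_gen[OF cV V, of j] jm vj by auto
    have e1: "shft a (pinf V (Suc j)) = pinf V j"
      using ne pinf_cns[of V j] by (simp add: shft_def pinf_0 jm vj)
    have e2: "shft a (pinf W k) = pinf W (Suc k)"
      using pinf_tl[of W k] by (simp add: shft_def pinf_0 km a_def)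
    have n0: "ninf V (Suc j) 0 = a" using ninf_Suc[OF V, of j] by (simp add: jm vj)
    have "(\<lambda>n. ninf V (Suc j) (Suc n)) = ninf V j" using ninf_Suc[OF V, of j] by simp
    then have e3: "shft a (ninf V (Suc j)) = ninf V j" using n0 by (simp add: shft_def)
    have e4: "shft a (ninf W k) = ninf W (Suc k)"
      using ninf_0_ne[OF cW W, of k] ninf_Suc[OF W, of k] by (simp add: shft_def km a_def)
    have "sfun rk V W j (Suc k) = sfun rk V W (Suc j) k"
      using F_shift[OF inj a gP(1)[of "Suc j"] gP(2)[of k] gN(1)[of "Suc j"] gN(2)[of k]]
      unfolding sfun_F e1 e2 e3 e4 .
    then show ?thesis using B(1,2) smod1 smod2 by simp
  qed
qed

theorem lemma2p7:
  fixes q :: nat and rk :: "letter \<Rightarrow> nat" and V W :: "letter list"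
  assumes "inj_on rk (alphabet q)"
    and "V \<noteq> []" and "W \<noteq> []"
    and "set V \<subseteq> alphabet q" and "set W \<subseteq> alphabet q"
    and "cyc_reduced V" and "cyc_reduced W"
  shows "\<forall>j k j' k'. ((j, k), (j', k')) \<in> Rrel V W \<longrightarrow> sfun rk V W j k = sfun rk V W j' k'"
proof (intro allI impI)
  fix j k j' k'
  let ?f = "\<lambda>p. sfun rk V W (fst p) (snd p)"
  assume "((j, k), (j', k')) \<in> Rrel V W"
  then have "((j, k), (j', k')) \<in> (Rgen V W \<union> (Rgen V W)\<inverse>)\<^sup>*" unfolding Rrel_def by blast
  then have "?f (j, k) = ?f (j', k')"
  proof (induction rule: rtrancl_induct)
    case base then show ?case by simp
  next
    case (step y z)
    have "?f y = ?f z"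
      using step(2) gen_step[OF assms, of y z] gen_step[OF assms, of z y] by auto
    then show ?case using step(3) by simp
  qed
  then show "sfun rk V W j k = sfun rk V W j' k'" by simp
qed

end
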